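(* Let $\mathcal T=LI([0,1])\cup\mathcal K$ be the extension of linear arithmetic over the real interval $[0,1]$ by a unary function symbol $f$ satisfying $\mathcal K=\{\forall x,y\,(x\le y\to f(x)\le f(y)),\ \forall x\,(f(x)\le 1)\}$, with $f$ uninterpreted and the arithmetic symbols interpreted. Let $G=(a\le b)\wedge(b\le f(b))$ with constants $a,b$. Then $G\models_{\mathcal T}a\le f^n(1)$ for every $n\in\mathbb N$, and no (finite) quantifier-free formula is a $\mathcal T$-general uniform interpolant of $G$ w.r.t. $\Sigma_s\cup C_s$ with $\Sigma_s=\{f\}$, $C_s=\{a\}$.
   Context: General uniform interpolant: for a theory $\mathcal T$ whose signature splits into interpreted symbols $\Pi_0$ and uninterpreted function symbols, a quantifier-free formula $\phi$ with additional constants $C$, and sets $\Sigma_s$, $C_s$ of uninterpreted function symbols and constants occurring in $\phi$: a quantifier-free formula $\psi$ over $\Pi_0\cup\Sigma_s$ with constants only from $C_s$ is a $\mathcal T$-general uniform interpolant of $\phi$ w.r.t. $\Sigma_s\cup C_s$ if $\phi\models_{\mathcal T}\psi$ and for every ground $\theta$ sharing with $\phi$ only $\Pi_0$-symbols, symbols of $\Sigma_s$ and constants of $C_s$, $\phi\models_{\mathcal T}\theta$ implies $\psi\models_{\mathcal T}\theta$. $f^n$ denotes $n$-fold iteration of $f$. *)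

theory Defs
  imports Complex_Main
begin

datatype tm =
    Cst nat
  | Num rat
  | Add tm tm
  | Scl rat tm
  | F tm

datatype fm =
    TT | FF
  | Le tm tm | Lt tm tm | Eq tm tm
  | Neg fm | Conj fm fm | Disj fm fm | Imp fm fm

primrec evt :: "(real \<Rightarrow> real) \<Rightarrow> (nat \<Rightarrow> real) \<Rightarrow> tm \<Rightarrow> real" where
  "evt f v (Cst c) = v c"
| "evt f v (Num q) = of_rat q"
| "evt f v (Add s t) = evt f v s + evt f v t"
| "evt f v (Scl q t) = of_rat q * evt f v t"
| "evt f v (F t) = f (evt f v t)"

primrec evf :: "(real \<Rightarrow> real) \<Rightarrow> (nat \<Rightarrow> real) \<Rightarrow> fm \<Rightarrow> bool" where
  "evf f v TT = True"
| "evf f v FF = False"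
| "evf f v (Le s t) = (evt f v s \<le> evt f v t)"
| "evf f v (Lt s t) = (evt f v s < evt f v t)"
| "evf f v (Eq s t) = (evt f v s = evt f v t)"
| "evf f v (Neg p) = (\<not> evf f v p)"
| "evf f v (Conj p q) = (evf f v p \<and> evf f v q)"
| "evf f v (Disj p q) = (evf f v p \<or> evf f v q)"
| "evf f v (Imp p q) = (evf f v p \<longrightarrow> evf f v q)"

primrec consts_tm :: "tm \<Rightarrow> nat set" where
  "consts_tm (Cst c) = {c}"
| "consts_tm (Num q) = {}"
| "consts_tm (Add s t) = consts_tm s \<union> consts_tm t"
| "consts_tm (Scl q t) = consts_tm t"
| "consts_tm (F t) = consts_tm t"

primrec consts_fm :: "fm \<Rightarrow> nat set" where
  "consts_fm TT = {}"
| "consts_fm FF = {}"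
| "consts_fm (Le s t) = consts_tm s \<union> consts_tm t"
| "consts_fm (Lt s t) = consts_tm s \<union> consts_tm t"
| "consts_fm (Eq s t) = consts_tm s \<union> consts_tm t"
| "consts_fm (Neg p) = consts_fm p"
| "consts_fm (Conj p q) = consts_fm p \<union> consts_fm q"
| "consts_fm (Disj p q) = consts_fm p \<union> consts_fm q"
| "consts_fm (Imp p q) = consts_fm p \<union> consts_fm q"

definition T_model :: "(real \<Rightarrow> real) \<Rightarrow> (nat \<Rightarrow> real) \<Rightarrow> bool" where
  "T_model f v \<longleftrightarrow>
     (\<forall>c. v c \<in> {0..1}) \<and>
     (\<forall>x\<in>{0..1}. f x \<in> {0..1}) \<and>
     (\<forall>x\<in>{0..1}. \<forall>y\<in>{0..1}. x \<le> y \<longrightarrow> f x \<le> f y) \<and>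
     (\<forall>x\<in>{0..1}. f x \<le> 1)"

definition entails_T :: "fm \<Rightarrow> fm \<Rightarrow> bool" (infix "\<Turnstile>\<^sub>T" 50) where
  "\<phi> \<Turnstile>\<^sub>T \<theta> \<longleftrightarrow> (\<forall>f v. T_model f v \<longrightarrow> evf f v \<phi> \<longrightarrow> evf f v \<theta>)"

text \<open>General uniform interpolant w.r.t. \<Sigma>_s \<union> C_s, where \<Sigma>_s = {f} (the only
  uninterpreted function symbol, so it may occur freely) and C_s = Cs.\<close>
definition is_gen_unif_interpolant :: "fm \<Rightarrow> nat set \<Rightarrow> fm \<Rightarrow> bool" where
  "is_gen_unif_interpolant \<phi> Cs \<psi> \<longleftrightarrow>
     consts_fm \<psi> \<subseteq> Cs \<and>
     \<phi> \<Turnstile>\<^sub>T \<psi> \<and>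
     (\<forall>\<theta>. consts_fm \<theta> \<inter> consts_fm \<phi> \<subseteq> Cs \<longrightarrow> \<phi> \<Turnstile>\<^sub>T \<theta> \<longrightarrow> \<psi> \<Turnstile>\<^sub>T \<theta>)"

definition ca :: tm where "ca = Cst 0"
definition cb :: tm where "cb = Cst 1"

definition G :: fm where "G = Conj (Le ca cb) (Le cb (F cb))"

end

theory Submission
  imports Defs
begin

primrec trt :: "(real \<Rightarrow> real) \<Rightarrow> (nat \<Rightarrow> real) \<Rightarrow> tm \<Rightarrow> real list" where
  "trt f v (Cst c) = []"
| "trt f v (Num q) = []"
| "trt f v (Add s t) = trt f v s @ trt f v t"
| "trt f v (Scl q t) = trt f v t"
| "trt f v (F t) = evt f v t # trt f v t"

primrec trf :: "(real \<Rightarrow> real) \<Rightarrow> (nat \<Rightarrow> real) \<Rightarrow> fm \<Rightarrow> real list" where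
  "trf f v TT = []"
| "trf f v FF = []"
| "trf f v (Le s t) = trt f v s @ trt f v t"
| "trf f v (Lt s t) = trt f v s @ trt f v t"
| "trf f v (Eq s t) = trt f v s @ trt f v t"
| "trf f v (Neg p) = trf f v p"
| "trf f v (Conj p q) = trf f v p @ trf f v q"
| "trf f v (Disj p q) = trf f v p @ trf f v q"
| "trf f v (Imp p q) = trf f v p @ trf f v q"

primrec nFt :: "tm \<Rightarrow> nat" where
  "nFt (Cst c) = 0"
| "nFt (Num q) = 0"
| "nFt (Add s t) = nFt s + nFt t"
| "nFt (Scl q t) = nFt t"
| "nFt (F t) = Suc (nFt t)"

primrec nFf :: "fm \<Rightarrow> nat" where
  "nFf TT = 0"
| "nFf FF = 0"
| "nFf (Le s t) = nFt s + nFt t"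
| "nFf (Lt s t) = nFt s + nFt t"
| "nFf (Eq s t) = nFt s + nFt t"
| "nFf (Neg p) = nFf p"
| "nFf (Conj p q) = nFf p + nFf q"
| "nFf (Disj p q) = nFf p + nFf q"
| "nFf (Imp p q) = nFf p + nFf q"

lemma len_trt: "length (trt f v t) = nFt t"
  by (induction t) auto

lemma len_trf: "length (trf f v p) = nFf p"
  by (induction p) (auto simp: len_trt)

lemma agree_t: "(\<forall>x\<in>set (trt g v t). f x = g x) \<Longrightarrow> evt f v t = evt g v t"
  by (induction t) auto

lemma agree_t2: "(\<forall>x\<in>set (trt g v t). f x = g x) \<Longrightarrow> trt f v t = trt g v t"
  by (induction t) (auto simp: agree_t)

lemma agree_f: "(\<forall>x\<in>set (trf g v p). f x = g x) \<Longrightarrow> evf f v p = evf g v p"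
proof (induction p)
  case (Le s t) then show ?case using agree_t[of g v s f] agree_t[of g v t f] by simp
next
  case (Lt s t) then show ?case using agree_t[of g v s f] agree_t[of g v t f] by simp
next
  case (Eq s t) then show ?case using agree_t[of g v s f] agree_t[of g v t f] by simp
qed auto

lemma cst_t1: "(\<forall>c\<in>consts_tm t. v c = w c) \<Longrightarrow> evt f v t = evt f w t"
  by (induction t) auto

lemma cst_t2: "(\<forall>c\<in>consts_tm t. v c = w c) \<Longrightarrow> trt f v t = trt f w t"
  by (induction t) (simp_all add: cst_t1)

lemma cst_f: "(\<forall>c\<in>consts_fm p. v c = w c) \<Longrightarrow> evf f v p = evf f w p \<and> trf f v p = trf f w p"
proof (induction p)
  case (Le s t) then show ?case using cst_t1[of s v w f] cst_t1[of t v w f] cst_t2[of s v w f] cst_t2[of t v w f] by simp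
next
  case (Lt s t) then show ?case using cst_t1[of s v w f] cst_t1[of t v w f] cst_t2[of s v w f] cst_t2[of t v w f] by simp
next
  case (Eq s t) then show ?case using cst_t1[of s v w f] cst_t1[of t v w f] cst_t2[of s v w f] cst_t2[of t v w f] by simp
qed auto

lemma evt_pow: "evt f v ((F ^^ n) t) = (f ^^ n) (evt f v t)"
  by (induction n) auto

lemma consts_pow: "consts_tm ((F ^^ n) t) = consts_tm t"
  by (induction n) auto

lemma part1: "G \<Turnstile>\<^sub>T Le ca ((F ^^ n) (Num 1))"
  unfolding entails_T_def
proof (intro allI impI)
  fix f v assume M: "T_model f v" and g: "evf f v G"
  have h: "v 0 \<le> v 1" "v 1 \<le> f (v 1)" using g by (auto simp: G_def ca_def cb_def)
  have v1: "v 1 \<in> {0..1}" using M by (auto simp: T_model_def)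
  have "(f ^^ n) 1 \<in> {0..1} \<and> v 1 \<le> (f ^^ n) 1"
  proof (induction n)
    case 0 then show ?case using v1 by auto
  next
    case (Suc n)
    then have a: "(f ^^ n) 1 \<in> {0..1}" "v 1 \<le> (f ^^ n) 1" by auto
    have "f ((f ^^ n) 1) \<in> {0..1}" using M a(1) by (auto simp: T_model_def)
    moreover have "f (v 1) \<le> f ((f ^^ n) 1)" using M a v1 by (auto simp: T_model_def)
    ultimately show ?case using h by auto
  qed
  then show "evf f v (Le ca ((F ^^ n) (Num 1)))" using h by (simp add: evt_pow ca_def)
qed

lemma gpow: 
  fixes d :: real assumes "d > 0"
  shows "((\<lambda>x. max 0 (x - d)) ^^ n) 1 = max 0 (1 - real n * d)"
proof (induction n)
  case (Suc n)
  have "max 0 (max 0 (1 - real n * d) - d) = max 0 (1 - real (Suc n) * d)"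
    using assms by (simp add: max_def algebra_simps)
  then show ?case using Suc by simp
qed simp

lemma pigeon:
  fixes d :: real and S :: "real set"
  assumes "finite S" "card S \<le> K" "d > 0"
  shows "\<exists>j\<le>K. \<forall>s\<in>S. \<not> (1/2 + 2 * real j * d \<le> s \<and> s \<le> 1/2 + 2 * real j * d + d)"
proof (rule ccontr)
  assume "\<not> ?thesis"
  then have "\<forall>j\<in>{0..K}. \<exists>s. s \<in> S \<and> 1/2 + 2 * real j * d \<le> s \<and> s \<le> 1/2 + 2 * real j * d + d" by auto
  from bchoice[OF this] obtain sel where sel: "\<forall>j\<in>{0..K}. sel j \<in> S \<and> 1/2 + 2 * real j * d \<le> sel j \<and> sel j \<le> 1/2 + 2 * real j * d + d"
    by blast
  have inj: "inj_on sel {0..K}"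
  proof (rule inj_onI)
    fix i j assume ij: "i \<in> {0..K}" "j \<in> {0..K}" "sel i = sel j"
    have si: "1/2 + 2 * real i * d \<le> sel i" "sel i \<le> 1/2 + 2 * real i * d + d"
      using sel ij(1) by auto
    have sj: "1/2 + 2 * real j * d \<le> sel j" "sel j \<le> 1/2 + 2 * real j * d + d"
      using sel ij(2) by auto
    have "2 * real i * d \<le> 2 * real j * d + d" "2 * real j * d \<le> 2 * real i * d + d"
      using si sj ij(3) by linarith+
    then have "(2 * real i) * d \<le> (2 * real j + 1) * d" "(2 * real j) * d \<le> (2 * real i + 1) * d"
      by (simp_all add: algebra_simps)
    then have "2 * real i \<le> 2 * real j + 1" "2 * real j \<le> 2 * real i + 1"
      using assms(3) mult_le_cancel_right_pos by blast+
    then show "i = j" by linarith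
  qed
  have "sel ` {0..K} \<subseteq> S" using sel by auto
  then have "card (sel ` {0..K}) \<le> card S" using assms(1) by (simp add: card_mono)
  then have "Suc K \<le> K" using card_image[OF inj] assms(2) by simp
  then show False by simp
qed

theorem mainTheorem6:
  shows "(\<forall>n::nat. G \<Turnstile>\<^sub>T Le ca ((F ^^ n) (Num 1)))
         \<and> \<not> (\<exists>\<psi>. is_gen_unif_interpolant G {0} \<psi>)"
proof
  show "\<forall>n::nat. G \<Turnstile>\<^sub>T Le ca ((F ^^ n) (Num 1))" using part1 by blast
  show "\<not> (\<exists>\<psi>. is_gen_unif_interpolant G {0} \<psi>)"
  proof
    assume "\<exists>\<psi>. is_gen_unif_interpolant G {0} \<psi>"
    then obtain \<psi> where cs: "consts_fm \<psi> \<subseteq> {0}" and ent: "G \<Turnstile>\<^sub>T \<psi>"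
      and un: "\<And>\<theta>. consts_fm \<theta> \<inter> consts_fm G \<subseteq> {0} \<Longrightarrow> G \<Turnstile>\<^sub>T \<theta> \<Longrightarrow> \<psi> \<Turnstile>\<^sub>T \<theta>"
      unfolding is_gen_unif_interpolant_def by blast
    define K where "K = nFf \<psi>"
    define d :: real where "d = 1 / (4 * (real K + 1))"
    have d0: "d > 0" by (simp add: d_def)
    have dK: "d * (4 * (real K + 1)) = 1" unfolding d_def by simp
    define g where "g = (\<lambda>x::real. max 0 (x - d))"
    define v0 where "v0 = (\<lambda>c::nat. 1/2 :: real)"
    define S where "S = set (trf g v0 \<psi>)"
    have "card S \<le> K" unfolding S_def K_def by (metis card_length len_trf)
    then obtain j where j: "j \<le> K"
      and free: "\<forall>s\<in>S. \<not> (1/2 + 2 * real j * d \<le> s \<and> s \<le> 1/2 + 2 * real j * d + d)"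
      using pigeon[of S K d] d0 S_def by auto
    define p where "p = 1/2 + 2 * real j * d"
    have jk: "real j * d \<le> real K * d" using j d0 by (simp add: mult_right_mono)
    have k4: "real K * d * 4 + 4 * d = 1" using dK by (simp add: algebra_simps)
    have j0: "0 \<le> real j * d" using d0 by simp
    have pb: "1/2 \<le> p" "p + d \<le> 1" unfolding p_def using jk k4 j0 d0 by linarith+
    define fp where "fp = (\<lambda>x. if p \<le> x \<and> x \<le> p + d then p else g x)"
    define v1 where "v1 = v0(1 := p)"
    have c1: "evf g v1 \<psi> = evf g v0 \<psi> \<and> trf g v1 \<psi> = trf g v0 \<psi>"
      using cs by (intro cst_f) (auto simp: v1_def)
    have ag: "evf fp v1 \<psi> = evf g v1 \<psi>"
      using free c1 by (intro agree_f) (auto simp: fp_def S_def p_def)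
    have Mp: "T_model fp v1"
      unfolding T_model_def fp_def g_def v1_def v0_def using pb d0
      by (auto split: if_splits)
    have Gp: "evf fp v1 G" using pb d0 unfolding G_def ca_def cb_def v1_def v0_def fp_def
      by auto
    have psi0: "evf g v0 \<psi>" using ent Mp Gp ag c1 unfolding entails_T_def by auto
    define n where "n = 2 * K + 3"
    have "\<psi> \<Turnstile>\<^sub>T Le ca ((F ^^ n) (Num 1))"
      by (rule un[OF _ part1]) (auto simp: consts_pow ca_def G_def cb_def)
    moreover have M0: "T_model g v0" unfolding T_model_def g_def v0_def using d0
      by auto
    ultimately have "evf g v0 (Le ca ((F ^^ n) (Num 1)))" using psi0
      unfolding entails_T_def by blast
    then have "1/2 \<le> (g ^^ n) 1" by (simp add: evt_pow ca_def v0_def)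
    also have "(g ^^ n) 1 = max 0 (1 - real n * d)" unfolding g_def using gpow d0 by blast
    finally have "1/2 \<le> 1 - real n * d" using d0 by linarith
    moreover have "real n * d = 2 * (real K * d) + 3 * d" by (simp add: n_def algebra_simps)
    moreover have "real K * d * 4 + 4 * d = 1" using dK by (simp add: algebra_simps)
    ultimately show False using d0 by linarith
  qed
qed

end
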